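(* Let $G=(V,E)$ be a connected graph and $1\le k\le |V|$. Let $D\subseteq V$ be such that every $v\in D$ is dominated by some $u\in V\setminus D$, and $|V\setminus D|\ge k$. Let $S\subseteq V\setminus D$ with $|S|=k$ be a local optimum with respect to swaps restricted to $V\setminus D$, i.e. for all $s\in S$ and all $o\in (V\setminus D)\setminus S$ we have $f((S\setminus\{s\})\cup\{o\})\ge f(S)$. Then $$f(S)\le 5\cdot \min\{f(T): T\subseteq V,\ |T|=k\},$$ equivalently $c(S)\ge \tfrac15\max\{c(T):T\subseteq V,\ |T|=k\}$.
   Context: Graphs are finite, undirected, unweighted, without self-loops, connected. $\mathrm{dist}$ is the shortest-path distance, $\mathrm{dist}(u,S)=\min_{s\in S}\mathrm{dist}(u,s)$, group farness $f(S)=\sum_{u\in V}\mathrm{dist}(u,S)$, and group closeness $c(S)=(|V|-|S|)/f(S)$. $N[v]$ is the closed neighborhood of $v$, and $u$ dominates $v$ if $N[v]\subseteq N[u]$. *)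

theory Defs
  imports Main
begin

definition simple_graph :: "'a set \<Rightarrow> ('a \<Rightarrow> 'a \<Rightarrow> bool) \<Rightarrow> bool" where
  "simple_graph V E \<longleftrightarrow> finite V \<and> V \<noteq> {} \<and>
     (\<forall>u v. E u v \<longrightarrow> u \<in> V \<and> v \<in> V) \<and>
     (\<forall>u v. E u v \<longrightarrow> E v u) \<and> (\<forall>v. \<not> E v v)"

definition is_walk :: "'a set \<Rightarrow> ('a \<Rightarrow> 'a \<Rightarrow> bool) \<Rightarrow> 'a list \<Rightarrow> bool" where
  "is_walk V E xs \<longleftrightarrow> xs \<noteq> [] \<and> set xs \<subseteq> V \<and>
     (\<forall>i. Suc i < length xs \<longrightarrow> E (xs ! i) (xs ! Suc i))"

definition connected_graph :: "'a set \<Rightarrow> ('a \<Rightarrow> 'a \<Rightarrow> bool) \<Rightarrow> bool" where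
  "connected_graph V E \<longleftrightarrow> simple_graph V E \<and>
     (\<forall>u\<in>V. \<forall>v\<in>V. \<exists>xs. is_walk V E xs \<and> hd xs = u \<and> last xs = v)"

definition dist :: "'a set \<Rightarrow> ('a \<Rightarrow> 'a \<Rightarrow> bool) \<Rightarrow> 'a \<Rightarrow> 'a \<Rightarrow> nat" where
  "dist V E u v = (LEAST n. \<exists>xs. is_walk V E xs \<and> hd xs = u \<and> last xs = v \<and> length xs = Suc n)"

definition dist_set :: "'a set \<Rightarrow> ('a \<Rightarrow> 'a \<Rightarrow> bool) \<Rightarrow> 'a \<Rightarrow> 'a set \<Rightarrow> nat" where
  "dist_set V E u S = Min (dist V E u ` S)"

definition farness :: "'a set \<Rightarrow> ('a \<Rightarrow> 'a \<Rightarrow> bool) \<Rightarrow> 'a set \<Rightarrow> nat" where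
  "farness V E S = (\<Sum>u\<in>V. dist_set V E u S)"

definition closed_nbhd :: "('a \<Rightarrow> 'a \<Rightarrow> bool) \<Rightarrow> 'a \<Rightarrow> 'a set" where
  "closed_nbhd E v = insert v {w. E v w}"

definition dominates :: "('a \<Rightarrow> 'a \<Rightarrow> bool) \<Rightarrow> 'a \<Rightarrow> 'a \<Rightarrow> bool" where
  "dominates E u v \<longleftrightarrow> closed_nbhd E v \<subseteq> closed_nbhd E u"

end

theory Submission
  imports Defs
begin

lemma is_walk_Cons:
  "is_walk V E (x # xs) \<longleftrightarrow> x \<in> V \<and> (xs = [] \<or> (E x (hd xs) \<and> is_walk V E xs))"
proof (cases xs)
  case Nil
  then show ?thesis by (auto simp: is_walk_def)
next
  case (Cons y ys)
  show ?thesis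
  proof
    assume h: "is_walk V E (x # xs)"
    have "E x y" using h Cons unfolding is_walk_def by (metis length_Cons nth_Cons_0 nth_Cons_Suc zero_less_Suc Suc_less_eq)
    moreover have "\<forall>i. Suc i < length xs \<longrightarrow> E (xs ! i) (xs ! Suc i)"
    proof (intro allI impI)
      fix i assume "Suc i < length xs"
      then have "Suc (Suc i) < length (x # xs)" by simp
      then have "E ((x#xs) ! Suc i) ((x#xs) ! Suc (Suc i))" using h unfolding is_walk_def by blast
      then show "E (xs ! i) (xs ! Suc i)" by simp
    qed
    ultimately show "x \<in> V \<and> (xs = [] \<or> (E x (hd xs) \<and> is_walk V E xs))"
      using h Cons unfolding is_walk_def by auto
  next
    assume h: "x \<in> V \<and> (xs = [] \<or> (E x (hd xs) \<and> is_walk V E xs))"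
    then have w: "is_walk V E xs" and exy: "E x y" using Cons by auto
    have "\<forall>i. Suc i < length (x#xs) \<longrightarrow> E ((x#xs) ! i) ((x#xs) ! Suc i)"
    proof (intro allI impI)
      fix i assume i: "Suc i < length (x # xs)"
      show "E ((x#xs) ! i) ((x#xs) ! Suc i)"
      proof (cases i)
        case 0 then show ?thesis using exy Cons by simp
      next
        case (Suc i') then show ?thesis using w i unfolding is_walk_def by simp
      qed
    qed
    then show "is_walk V E (x # xs)" using h w unfolding is_walk_def by auto
  qed
qed

lemma walk_append:
  "is_walk V E xs \<Longrightarrow> is_walk V E ys \<Longrightarrow> E (last xs) (hd ys) \<Longrightarrow> is_walk V E (xs @ ys)"
proof (induction xs)
  case Nil then show ?case by (simp add: is_walk_def)
next
  case (Cons x xs)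
  show ?case
  proof (cases "xs = []")
    case True then show ?thesis using Cons.prems by (simp add: is_walk_Cons)
  next
    case False
    then show ?thesis using Cons by (auto simp: is_walk_Cons)
  qed
qed

lemma walk_split:
  "is_walk V E (xs @ ys) \<Longrightarrow> xs \<noteq> [] \<Longrightarrow> ys \<noteq> [] \<Longrightarrow>
     is_walk V E xs \<and> is_walk V E ys \<and> E (last xs) (hd ys)"
proof (induction xs)
  case Nil then show ?case by simp
next
  case (Cons x xs)
  show ?case
  proof (cases "xs = []")
    case True then show ?thesis using Cons.prems by (simp add: is_walk_Cons)
  next
    case False
    then show ?thesis using Cons by (auto simp: is_walk_Cons)
  qed
qed

lemma walk_rev:
  assumes "\<forall>u v. E u v \<longrightarrow> E v u"
  shows "is_walk V E xs \<Longrightarrow> is_walk V E (rev xs)"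
proof (induction xs)
  case Nil then show ?case by (simp add: is_walk_def)
next
  case (Cons x xs)
  show ?case
  proof (cases "xs = []")
    case True then show ?thesis using Cons.prems by simp
  next
    case False
    then have "is_walk V E (rev xs)" "E (hd xs) x" "x \<in> V" using Cons assms by (auto simp: is_walk_Cons)
    moreover have "is_walk V E [x]" using \<open>x \<in> V\<close> by (simp add: is_walk_def)
    ultimately show ?thesis using False by (auto intro!: walk_append simp: last_rev)
  qed
qed

lemma dist_le:
  "is_walk V E xs \<Longrightarrow> hd xs = u \<Longrightarrow> last xs = v \<Longrightarrow> dist V E u v \<le> length xs - 1"
  unfolding dist_def
  by (rule Least_le) (metis Suc_diff_1 is_walk_def length_greater_0_conv)

lemma dist_walk:
  assumes "connected_graph V E" "u \<in> V" "v \<in> V"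
  shows "\<exists>xs. is_walk V E xs \<and> hd xs = u \<and> last xs = v \<and> length xs = Suc (dist V E u v)"
proof -
  obtain xs where "is_walk V E xs" "hd xs = u" "last xs = v"
    using assms unfolding connected_graph_def by blast
  then have "\<exists>n xs. is_walk V E xs \<and> hd xs = u \<and> last xs = v \<and> length xs = Suc n"
    by (metis Suc_diff_1 is_walk_def length_greater_0_conv)
  then show ?thesis unfolding dist_def by (rule LeastI_ex)
qed

lemma dist_self: "u \<in> V \<Longrightarrow> dist V E u u = 0"
  using dist_le[of V E "[u]" u u] by (simp add: is_walk_def)

lemma dist_zero:
  assumes "connected_graph V E" "u \<in> V" "v \<in> V" "dist V E u v = 0"
  shows "u = v"
proof -
  obtain xs where "is_walk V E xs" "hd xs = u" "last xs = v" "length xs = Suc 0"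
    using dist_walk[OF assms(1-3)] assms(4) by auto
  then show ?thesis by (cases xs) auto
qed

lemma dist_tri:
  assumes "connected_graph V E" "u \<in> V" "v \<in> V" "w \<in> V"
  shows "dist V E u w \<le> dist V E u v + dist V E v w"
proof -
  obtain xs where xs: "is_walk V E xs" "hd xs = u" "last xs = v" "length xs = Suc (dist V E u v)"
    using dist_walk[OF assms(1-3)] by auto
  obtain ys where ys: "is_walk V E ys" "hd ys = v" "last ys = w" "length ys = Suc (dist V E v w)"
    using dist_walk[OF assms(1,3,4)] by auto
  show ?thesis
  proof (cases "tl ys = []")
    case True
    then have "ys = [v]" using ys by (cases ys) auto
    then have "w = v" "dist V E v w = 0" using ys by auto
    then show ?thesis using dist_le[OF xs(1-2)] xs by auto
  next
    case False
    then obtain y r where ysr: "ys = v # y # r" using ys by (cases ys; cases "tl ys") auto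
    then have "E v y" "is_walk V E (y # r)" using ys by (auto simp: is_walk_Cons)
    then have "is_walk V E (xs @ (y # r))" using xs by (intro walk_append) auto
    moreover have "hd (xs @ (y # r)) = u" using xs by (cases xs) auto
    moreover have "last (xs @ (y # r)) = w" using ys ysr by simp
    ultimately have "dist V E u w \<le> length (xs @ (y # r)) - 1" by (rule dist_le)
    then show ?thesis using xs ys ysr by simp
  qed
qed

lemma dist_sym:
  assumes "connected_graph V E" "u \<in> V" "v \<in> V"
  shows "dist V E u v = dist V E v u"
proof -
  have symE: "\<forall>u v. E u v \<longrightarrow> E v u" using assms(1) unfolding connected_graph_def simple_graph_def by blast
  have le: "dist V E a b \<le> dist V E b a" if ha: "a \<in> V" and hb: "b \<in> V" for a b
  proof -
    obtain xs where xs: "is_walk V E xs" "hd xs = b" "last xs = a" "length xs = Suc (dist V E b a)"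
      using dist_walk[OF assms(1) hb ha] by auto
    have "is_walk V E (rev xs)" using walk_rev[OF symE xs(1)] .
    moreover have "hd (rev xs) = a" "last (rev xs) = b" using xs
      by (auto simp: hd_rev last_rev)
    ultimately show ?thesis using dist_le xs(4) by fastforce
  qed
  show ?thesis using le[OF assms(2,3)] le[OF assms(3,2)] by simp
qed

lemma dist_dom:
  assumes "connected_graph V E" "u \<in> V" "v \<in> V" "x \<in> V" "dominates E u v" "x \<noteq> v"
  shows "dist V E x u \<le> dist V E x v"
proof -
  have symE: "\<forall>u v. E u v \<longrightarrow> E v u" using assms(1) unfolding connected_graph_def simple_graph_def by blast
  obtain xs where xs: "is_walk V E xs" "hd xs = x" "last xs = v" "length xs = Suc (dist V E x v)"
    using dist_walk[OF assms(1,4,3)] by auto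
  define ys where "ys = butlast xs"
  have xs_eq: "xs = ys @ [v]" using xs unfolding ys_def
    by (metis append_butlast_last_id is_walk_def)
  have "ys \<noteq> []" using xs xs_eq assms(6) by auto
  then have ys: "is_walk V E ys" "E (last ys) v" using walk_split[of V E ys "[v]"] xs xs_eq by auto
  have hys: "hd ys = x" using xs xs_eq \<open>ys \<noteq> []\<close> by simp
  have "last ys \<in> closed_nbhd E v" using ys symE by (auto simp: closed_nbhd_def)
  then have "last ys \<in> closed_nbhd E u" using assms(5) by (auto simp: dominates_def)
  then have cases: "last ys = u \<or> E u (last ys)" by (auto simp: closed_nbhd_def)
  show ?thesis
  proof (cases "last ys = u")
    case True
    then have "dist V E x u \<le> length ys - 1" using dist_le[OF ys(1) hys] by simp
    then show ?thesis using xs xs_eq by simp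
  next
    case False
    then have "E (last ys) u" using cases symE by blast
    moreover have "is_walk V E [u]" using assms(2) by (simp add: is_walk_def)
    ultimately have "is_walk V E (ys @ [u])" using ys by (intro walk_append) auto
    then have "dist V E x u \<le> length (ys @ [u]) - 1" using dist_le hys \<open>ys \<noteq> []\<close> by fastforce
    then show ?thesis using xs xs_eq by simp
  qed
qed

lemma dist_dom1:
  assumes "connected_graph V E" "u \<in> V" "v \<in> V" "dominates E u v" "u \<noteq> v"
  shows "dist V E v u \<le> 1"
proof -
  have symE: "\<forall>u v. E u v \<longrightarrow> E v u" using assms(1) unfolding connected_graph_def simple_graph_def by blast
  have "v \<in> closed_nbhd E u" using assms(4) by (auto simp: dominates_def closed_nbhd_def)
  then have "E v u" using assms(5) symE by (auto simp: closed_nbhd_def)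
  then have "is_walk V E [v, u]" using assms(2,3) by (simp add: is_walk_Cons)
  then show ?thesis using dist_le[of V E "[v,u]" v u] by simp
qed

lemma rot_perm:
  fixes N :: "'a set" and c :: "'a \<Rightarrow> 'b"
  assumes fin: "finite N"
  shows "\<exists>p. bij_betw p N N \<and> (\<forall>j\<in>N. c (p j) = c j \<longrightarrow> card N < 2 * card {j'\<in>N. c j' = c j})"
proof (cases "N = {}")
  case True
  then show ?thesis by (intro exI[of _ id]) auto
next
  case False
  obtain key :: "'b \<Rightarrow> nat" and n where key: "key ` (c ` N) = {i. i < n}" "inj_on key (c ` N)"
    using finite_imp_inj_to_nat_seg[of "c ` N"] fin by blast
  obtain xs where xs: "set xs = N" "distinct xs" using finite_distinct_list[OF fin] by blast
  define L where "L = sort_key (\<lambda>x. key (c x)) xs"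
  have L: "set L = N" "distinct L" "sorted (map (\<lambda>x. key (c x)) L)"
    using xs unfolding L_def by auto
  define m where "m = length L"
  have m: "m = card N" using L distinct_card m_def by metis
  have mpos: "0 < m" using False m fin by auto
  define h where "h = m div 2"
  define r where "r i = (if i + h < m then i + h else i + h - m)" for i
  have hm: "h < m" using mpos h_def by simp
  have r_in: "r i < m" if "i < m" for i using that hm unfolding r_def by auto
  have r_inj: "inj_on r {..<m}"
    by (rule inj_onI) (auto simp: r_def split: if_splits)
  have r_bij: "bij_betw r {..<m} {..<m}"
    unfolding bij_betw_def using r_inj endo_inj_surj[of "{..<m}" r] r_in by auto
  have nL: "bij_betw (nth L) {..<m} N" using bij_betw_nth[of L "{..<m}" N] L m_def by simp
  define p where "p = nth L \<circ> r \<circ> inv_into {..<m} (nth L)"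
  have pb: "bij_betw p N N" unfolding p_def
    by (rule bij_betw_trans[OF bij_betw_inv_into[OF nL] bij_betw_trans[OF r_bij nL]])
  have contig: "c (L ! t) = c (L ! a)" if "a \<le> t" "t \<le> b" "b < m" "c (L ! a) = c (L ! b)" for a t b
  proof -
    have "key (c (L ! a)) \<le> key (c (L ! t))" using sorted_nth_mono[OF L(3), of a t] that m_def by simp
    moreover have "key (c (L ! t)) \<le> key (c (L ! b))" using sorted_nth_mono[OF L(3), of t b] that m_def by simp
    ultimately have "key (c (L ! t)) = key (c (L ! a))" using that by simp
    moreover have "L ! t \<in> N" "L ! a \<in> N" using that L(1) m_def by auto
    ultimately show ?thesis using key(2) by (auto dest: inj_onD)
  qed
  have cardint: "b + 1 - a \<le> card {j'\<in>N. c j' = c (L ! a)}"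
    if "a \<le> b" "b < m" "c (L ! a) = c (L ! b)" for a b
  proof -
    have "nth L ` {a..b} \<subseteq> {j'\<in>N. c j' = c (L ! a)}"
    proof
      fix x assume "x \<in> nth L ` {a..b}"
      then obtain t where t: "a \<le> t" "t \<le> b" "x = L ! t" by auto
      then have "c x = c (L ! a)" using contig[of a t b] that by simp
      moreover have "x \<in> N" using t that L(1) m_def by auto
      ultimately show "x \<in> {j'\<in>N. c j' = c (L ! a)}" by simp
    qed
    moreover have "card (nth L ` {a..b}) = b + 1 - a"
      using card_image[OF inj_on_nth[OF L(2), of "{a..b}"]] that m_def by auto
    ultimately show ?thesis using fin card_mono[of "{j'\<in>N. c j' = c (L ! a)}" "nth L ` {a..b}"] by simp
  qed
  have "\<forall>j\<in>N. c (p j) = c j \<longrightarrow> card N < 2 * card {j'\<in>N. c j' = c j}"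
  proof (intro ballI impI)
    fix j assume j: "j \<in> N" and eq: "c (p j) = c j"
    define i where "i = inv_into {..<m} (nth L) j"
    have i: "i < m" "L ! i = j" using j nL unfolding i_def
      by (auto simp: bij_betw_def inv_into_into f_inv_into_f)
    have pj: "p j = L ! r i" unfolding p_def i_def by simp
    show "card N < 2 * card {j'\<in>N. c j' = c j}"
    proof (cases "i + h < m")
      case True
      then have "c (L ! i) = c (L ! (i + h))" using eq pj i r_def by simp
      then have "i + h + 1 - i \<le> card {j'\<in>N. c j' = c j}" using cardint[of i "i+h"] True i by simp
      then show ?thesis using m h_def by simp
    next
      case False
      then have "c (L ! (i + h - m)) = c (L ! i)" using eq pj i r_def by simp
      then have "i + 1 - (i + h - m) \<le> card {j'\<in>N. c j' = c (L ! (i + h - m))}"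
        using cardint[of "i + h - m" i] False i hm by simp
      then have "i + 1 - (i + h - m) \<le> card {j'\<in>N. c j' = c j}"
        using \<open>c (L ! (i + h - m)) = c (L ! i)\<close> i by simp
      then show ?thesis using m h_def False i by simp
    qed
  qed
  then show ?thesis using pb by blast
qed

lemma assign2:
  assumes "finite A"
  shows "finite R \<Longrightarrow> card R \<le> 2 * card A \<Longrightarrow> \<exists>g. (\<forall>r\<in>R. g r \<in> A) \<and> (\<forall>a. card {r\<in>R. g r = a} \<le> 2)"
  using assms
proof (induction A arbitrary: R rule: finite_induct)
  case empty
  then show ?case by auto
next
  case (insert a A)
  obtain R2 where R2: "R2 \<subseteq> R" "card R2 = min 2 (card R)" "finite R2"
    using obtain_subset_with_card_n[of "min 2 (card R)" R] by auto
  define R1 where "R1 = R - R2"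
  have "card R1 = card R - card R2" unfolding R1_def using R2 insert.prems by (simp add: card_Diff_subset)
  then have "card R1 \<le> 2 * card A" using insert.prems insert.hyps R2 by auto
  then obtain g' where g': "\<forall>r\<in>R1. g' r \<in> A" "\<forall>b. card {r\<in>R1. g' r = b} \<le> 2"
    using insert.IH[of R1] insert.prems R1_def by auto
  define g where "g r = (if r \<in> R2 then a else g' r)" for r
  have "\<forall>r\<in>R. g r \<in> insert a A" using g' unfolding g_def R1_def by auto
  moreover have "card {r\<in>R. g r = b} \<le> 2" for b
  proof (cases "b = a")
    case True
    have "{r\<in>R. g r = b} \<subseteq> R2" using g' insert.hyps True unfolding g_def R1_def by auto
    then show ?thesis using R2 card_mono[OF R2(3)] by (metis dual_order.trans min.cobounded1)
  next
    case False
    have "{r\<in>R. g r = b} \<subseteq> {r\<in>R1. g' r = b}" using False unfolding g_def R1_def by auto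
    moreover have "finite {r\<in>R1. g' r = b}" using insert.prems R1_def by auto
    ultimately show ?thesis using g'(2)[rule_format, of b] by (meson card_mono order_trans)
  qed
  ultimately show ?case by blast
qed

lemma pairing:
  fixes S :: "'s set" and Y :: "'q set" and cap :: "'s \<Rightarrow> 'q \<Rightarrow> bool"
  assumes finS: "finite S" and finY: "finite Y" and cardSY: "card Y \<le> card S"
    and uniq: "\<forall>q\<in>Y. \<forall>s1\<in>S. \<forall>s2\<in>S. cap s1 q \<longrightarrow> cap s2 q \<longrightarrow> s1 = s2"
  shows "\<exists>\<rho>. (\<forall>q\<in>Y. \<rho> q \<in> S) \<and> (\<forall>s\<in>S. card {q\<in>Y. \<rho> q = s} \<le> 2)
           \<and> (\<forall>q\<in>Y. \<forall>q'\<in>Y. cap (\<rho> q) q' \<longrightarrow> q' = q)"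
proof -
  define cs where "cs s = {q\<in>Y. cap s q}" for s
  define S1 where "S1 = {s\<in>S. card (cs s) = 1}"
  define S0 where "S0 = {s\<in>S. cs s = {}}"
  define U where "U = (\<Union>s\<in>S1. cs s)"
  define R where "R = Y - U"
  have fincs: "finite (cs s)" for s using finY unfolding cs_def by auto
  have disj: "cs s \<inter> cs t = {}" if "s \<in> S" "t \<in> S" "s \<noteq> t" for s t
    using uniq that unfolding cs_def by auto
  have "card U = (\<Sum>s\<in>S1. card (cs s))" unfolding U_def
    by (rule card_UN_disjoint) (use finS fincs disj in \<open>auto simp: S1_def\<close>)
  also have "\<dots> = card S1" unfolding S1_def by simp
  finally have cardU: "card U = card S1" .
  have "(\<Sum>s\<in>S. card (cs s)) = card (\<Union>s\<in>S. cs s)"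
    by (rule card_UN_disjoint[symmetric]) (use finS fincs disj in auto)
  also have "\<dots> \<le> card Y" using finY by (intro card_mono) (auto simp: cs_def)
  finally have sumcs: "(\<Sum>s\<in>S. card (cs s)) \<le> card Y" .
  have pt: "2 \<le> card (cs s) + ((if s \<in> S0 then 2 else 0) + (if s \<in> S1 then 1 else 0))" if "s \<in> S" for s
    using that fincs[of s] unfolding S0_def S1_def by (cases "card (cs s)") auto
  have "(\<Sum>s\<in>S. (2::nat)) \<le> (\<Sum>s\<in>S. card (cs s) + ((if s \<in> S0 then 2 else 0) + (if s \<in> S1 then 1 else 0)))"
    by (rule sum_mono) (rule pt)
  also have "\<dots> = (\<Sum>s\<in>S. card (cs s)) + ((\<Sum>s\<in>S. (if s \<in> S0 then 2 else 0)) + (\<Sum>s\<in>S. (if s \<in> S1 then 1 else 0)))"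
    by (simp add: sum.distrib)
  also have "(\<Sum>s\<in>S. (if s \<in> S0 then 2 else 0)) = (\<Sum>s\<in>{s\<in>S. s \<in> S0}. (2::nat))"
    by (rule sum.inter_filter[symmetric]) (rule finS)
  also have "\<dots> = 2 * card S0" by (simp add: S0_def)
  also have "(\<Sum>s\<in>S. (if s \<in> S1 then 1 else 0)) = (\<Sum>s\<in>{s\<in>S. s \<in> S1}. (1::nat))"
    by (rule sum.inter_filter[symmetric]) (rule finS)
  also have "\<dots> = card S1" by (simp add: S1_def)
  finally have "2 * card S \<le> (\<Sum>s\<in>S. card (cs s)) + (2 * card S0 + card S1)" by simp
  then have key: "card Y \<le> 2 * card S0 + card S1" using sumcs cardSY by linarith
  have "U \<subseteq> Y" unfolding U_def cs_def by auto
  then have "card R = card Y - card U" unfolding R_def using finY by (simp add: card_Diff_subset finite_subset)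
  then have "card R \<le> 2 * card S0" using key cardU by simp
  moreover have "finite R" "finite S0" using finY finS unfolding R_def S0_def by auto
  ultimately obtain g where g: "\<forall>r\<in>R. g r \<in> S0" "\<forall>a. card {r\<in>R. g r = a} \<le> 2"
    using assign2 by blast
  define \<rho> where "\<rho> q = (if \<exists>s\<in>S1. cap s q then (SOME s. s \<in> S1 \<and> cap s q) else g q)" for q
  have rho1: "\<rho> q \<in> S1 \<and> cap (\<rho> q) q" if "\<exists>s\<in>S1. cap s q" for q
    using that unfolding \<rho>_def by (auto intro: someI2_ex)
  have rho2: "\<rho> q = g q" "q \<in> R" if "\<not> (\<exists>s\<in>S1. cap s q)" "q \<in> Y" for q
    using that unfolding \<rho>_def R_def U_def cs_def by auto
  have S01: "S0 \<inter> S1 = {}" unfolding S0_def S1_def by auto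
  have A: "\<forall>q\<in>Y. \<rho> q \<in> S"
    using rho1 rho2 g unfolding S1_def S0_def by fastforce
  have B: "card {q\<in>Y. \<rho> q = s} \<le> 2" if "s \<in> S" for s
  proof (cases "s \<in> S1")
    case True
    have "{q\<in>Y. \<rho> q = s} \<subseteq> cs s"
    proof
      fix q assume q: "q \<in> {q\<in>Y. \<rho> q = s}"
      show "q \<in> cs s"
      proof (cases "\<exists>s\<in>S1. cap s q")
        case True then show ?thesis using rho1 q unfolding cs_def by auto
      next
        case False then have "\<rho> q \<in> S0" using rho2 g q by auto
        then show ?thesis using q \<open>s \<in> S1\<close> S01 by auto
      qed
    qed
    moreover have "card (cs s) = 1" using True S1_def by simp
    ultimately show ?thesis using fincs[of s] by (metis card_mono le_trans one_le_numeral)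
  next
    case False
    have "{q\<in>Y. \<rho> q = s} \<subseteq> {r\<in>R. g r = s}"
    proof
      fix q assume q: "q \<in> {q\<in>Y. \<rho> q = s}"
      then have "\<not> (\<exists>s\<in>S1. cap s q)" using rho1 False by auto
      then show "q \<in> {r\<in>R. g r = s}" using rho2 q by auto
    qed
    moreover have "finite {r\<in>R. g r = s}" using \<open>finite R\<close> by simp
    ultimately show ?thesis using g(2)[rule_format, of s] by (meson card_mono order_trans)
  qed
  have C: "q' = q" if "q \<in> Y" "q' \<in> Y" "cap (\<rho> q) q'" for q q'
  proof (cases "\<exists>s\<in>S1. cap s q")
    case True
    then have r: "\<rho> q \<in> S1" "cap (\<rho> q) q" using rho1 by auto
    then have "card (cs (\<rho> q)) = 1" by (simp add: S1_def)
    moreover have "q \<in> cs (\<rho> q)" "q' \<in> cs (\<rho> q)" using r that unfolding cs_def by auto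
    ultimately show ?thesis by (metis card_1_singletonE singletonD)
  next
    case False
    then have "\<rho> q \<in> S0" using rho2 g that by auto
    then show ?thesis using that unfolding S0_def cs_def by auto
  qed
  show ?thesis using A B C by blast
qed

definition cost :: "'a set \<Rightarrow> ('a \<Rightarrow> 'a \<Rightarrow> nat) \<Rightarrow> 'a set \<Rightarrow> nat" where
  "cost C d X = (\<Sum>j\<in>C. Min (d j ` X))"

lemma kmedian:
  fixes d :: "'a \<Rightarrow> 'a \<Rightarrow> nat" and C S Y :: "'a set"
  assumes finC: "finite C" and SC: "S \<subseteq> C" and YC: "Y \<subseteq> C" and Sne: "S \<noteq> {}" and Yne: "Y \<noteq> {}"
    and cardSY: "card Y \<le> card S"
    and sym: "\<forall>x\<in>C. \<forall>y\<in>C. d x y = d y x"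
    and tri: "\<forall>x\<in>C. \<forall>y\<in>C. \<forall>z\<in>C. d x z \<le> d x y + d y z"
    and loc: "\<forall>s\<in>S. \<forall>q\<in>Y. cost C d S \<le> cost C d (insert q (S - {s}))"
  shows "cost C d S \<le> 5 * cost C d Y"
proof -
  have finS: "finite S" and finY: "finite Y" using finC SC YC finite_subset by auto
  define Sj where "Sj j = Min (d j ` S)" for j
  define Oj where "Oj j = Min (d j ` Y)" for j
  have "\<forall>j. \<exists>s. s \<in> S \<and> d j s = Sj j"
  proof
    fix j have "Sj j \<in> d j ` S" unfolding Sj_def using finS Sne by (intro Min_in) auto
    then show "\<exists>s. s \<in> S \<and> d j s = Sj j" by auto
  qed
  then obtain \<sigma> where "\<forall>j. \<sigma> j \<in> S \<and> d j (\<sigma> j) = Sj j" using choice[of "\<lambda>j s. s \<in> S \<and> d j s = Sj j"] by blast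
  then have \<sigma>: "\<And>j. \<sigma> j \<in> S" "\<And>j. d j (\<sigma> j) = Sj j" by auto
  have "\<forall>j. \<exists>s. s \<in> Y \<and> d j s = Oj j"
  proof
    fix j have "Oj j \<in> d j ` Y" unfolding Oj_def using finY Yne by (intro Min_in) auto
    then show "\<exists>s. s \<in> Y \<and> d j s = Oj j" by auto
  qed
  then obtain \<tau> where "\<forall>j. \<tau> j \<in> Y \<and> d j (\<tau> j) = Oj j" using choice[of "\<lambda>j s. s \<in> Y \<and> d j s = Oj j"] by blast
  then have \<tau>: "\<And>j. \<tau> j \<in> Y" "\<And>j. d j (\<tau> j) = Oj j" by auto
  define cap where "cap s q \<longleftrightarrow> card {j\<in>C. \<tau> j = q} < 2 * card {j\<in>C. \<tau> j = q \<and> \<sigma> j = s}" for s q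
  have "\<forall>q. \<exists>p. bij_betw p {j\<in>C. \<tau> j = q} {j\<in>C. \<tau> j = q} \<and>
      (\<forall>j\<in>{j\<in>C. \<tau> j = q}. \<sigma> (p j) = \<sigma> j \<longrightarrow>
         card {j\<in>C. \<tau> j = q} < 2 * card {j'\<in>{j\<in>C. \<tau> j = q}. \<sigma> j' = \<sigma> j})"
    by (intro allI rot_perm) (use finC in auto)
  then obtain P where P0: "\<forall>q. bij_betw (P q) {j\<in>C. \<tau> j = q} {j\<in>C. \<tau> j = q} \<and>
      (\<forall>j\<in>{j\<in>C. \<tau> j = q}. \<sigma> (P q j) = \<sigma> j \<longrightarrow>
         card {j\<in>C. \<tau> j = q} < 2 * card {j'\<in>{j\<in>C. \<tau> j = q}. \<sigma> j' = \<sigma> j})"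
    using choice[of "\<lambda>q p. bij_betw p {j\<in>C. \<tau> j = q} {j\<in>C. \<tau> j = q} \<and>
      (\<forall>j\<in>{j\<in>C. \<tau> j = q}. \<sigma> (p j) = \<sigma> j \<longrightarrow>
         card {j\<in>C. \<tau> j = q} < 2 * card {j'\<in>{j\<in>C. \<tau> j = q}. \<sigma> j' = \<sigma> j})"] by blast
  have P: "\<And>q. bij_betw (P q) {j\<in>C. \<tau> j = q} {j\<in>C. \<tau> j = q}"
    "\<And>q j. j\<in>{j\<in>C. \<tau> j = q} \<Longrightarrow> \<sigma> (P q j) = \<sigma> j \<Longrightarrow>
         card {j\<in>C. \<tau> j = q} < 2 * card {j'\<in>{j\<in>C. \<tau> j = q}. \<sigma> j' = \<sigma> j}"
    using P0 by blast+
  define \<pi> where "\<pi> j = P (\<tau> j) j" for j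
  have pi1: "\<pi> j \<in> C" "\<tau> (\<pi> j) = \<tau> j" if "j \<in> C" for j
    using P(1)[of "\<tau> j"] that unfolding \<pi>_def bij_betw_def by auto
  have pi2: "cap (\<sigma> j) (\<tau> j)" if "j \<in> C" "\<sigma> (\<pi> j) = \<sigma> j" for j
  proof -
    have "{j'\<in>{x\<in>C. \<tau> x = \<tau> j}. \<sigma> j' = \<sigma> j} = {j'\<in>C. \<tau> j' = \<tau> j \<and> \<sigma> j' = \<sigma> j}" by auto
    then show ?thesis using P(2)[of j "\<tau> j"] that unfolding cap_def \<pi>_def by auto
  qed
  have pi_inj: "inj_on \<pi> C"
  proof (rule inj_onI)
    fix x y assume xy: "x \<in> C" "y \<in> C" "\<pi> x = \<pi> y"
    have "\<tau> x = \<tau> (\<pi> x)" using pi1(2)[OF xy(1)] by simp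
    also have "\<dots> = \<tau> y" using pi1(2)[OF xy(2)] xy(3) by simp
    finally have txy: "\<tau> x = \<tau> y" .
    have inj: "inj_on (P (\<tau> x)) {j\<in>C. \<tau> j = \<tau> x}" using P(1)[of "\<tau> x"] by (rule bij_betw_imp_inj_on)
    have "P (\<tau> x) x = P (\<tau> x) y" using xy(3) txy unfolding \<pi>_def by simp
    then show "x = y" using inj_onD[OF inj] xy(1,2) txy by simp
  qed
  have pi_bij: "bij_betw \<pi> C C"
  proof -
    have "\<pi> ` C \<subseteq> C" using pi1 by auto
    then show ?thesis unfolding bij_betw_def using pi_inj endo_inj_surj[OF finC _ pi_inj] by simp
  qed
  have uniq: "\<forall>q\<in>Y. \<forall>s1\<in>S. \<forall>s2\<in>S. cap s1 q \<longrightarrow> cap s2 q \<longrightarrow> s1 = s2"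
  proof (intro ballI impI, rule ccontr)
    fix q s1 s2 assume h: "cap s1 q" "cap s2 q" "s1 \<noteq> s2"
    define A1 where "A1 = {j\<in>C. \<tau> j = q \<and> \<sigma> j = s1}"
    define A2 where "A2 = {j\<in>C. \<tau> j = q \<and> \<sigma> j = s2}"
    have "card A1 + card A2 = card (A1 \<union> A2)"
      using h(3) finC by (intro card_Un_disjoint[symmetric]) (auto simp: A1_def A2_def)
    also have "\<dots> \<le> card {j\<in>C. \<tau> j = q}"
      using finC by (intro card_mono) (auto simp: A1_def A2_def)
    finally show False using h unfolding cap_def A1_def A2_def by linarith
  qed
  obtain \<rho> where \<rho>: "\<forall>q\<in>Y. \<rho> q \<in> S" "\<forall>s\<in>S. card {q\<in>Y. \<rho> q = s} \<le> 2"
    "\<forall>q\<in>Y. \<forall>q'\<in>Y. cap (\<rho> q) q' \<longrightarrow> q' = q"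
    using pairing[OF finS finY cardSY uniq] by blast
  define X where "X j = Oj j + Oj (\<pi> j) + Sj (\<pi> j)" for j
  have chain: "d j (\<sigma> (\<pi> j)) \<le> X j" if "j \<in> C" for j
  proof -
    have in_C: "\<tau> j \<in> C" "\<pi> j \<in> C" "\<sigma> (\<pi> j) \<in> C"
      using \<tau>(1)[of j] \<sigma>(1)[of "\<pi> j"] YC SC pi1(1)[OF that] by blast+
    have "d j (\<sigma> (\<pi> j)) \<le> d j (\<tau> j) + d (\<tau> j) (\<sigma> (\<pi> j))" using tri that in_C by blast
    also have "d (\<tau> j) (\<sigma> (\<pi> j)) \<le> d (\<tau> j) (\<pi> j) + d (\<pi> j) (\<sigma> (\<pi> j))" using tri in_C by blast
    also have "d (\<tau> j) (\<pi> j) = Oj (\<pi> j)" 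
    proof -
      have "d (\<tau> j) (\<pi> j) = d (\<pi> j) (\<tau> j)" using sym in_C by blast
      also have "\<dots> = d (\<pi> j) (\<tau> (\<pi> j))" using pi1(2)[OF that] by simp
      finally show ?thesis using \<tau>(2)[of "\<pi> j"] by simp
    qed
    finally show ?thesis using \<tau>(2)[of j] \<sigma>(2)[of "\<pi> j"] unfolding X_def by simp
  qed
  have SjX: "Sj j \<le> X j" if "j \<in> C" for j
  proof -
    have "Sj j \<le> d j (\<sigma> (\<pi> j))" unfolding Sj_def using finS \<sigma>(1) by (intro Min_le) auto
    then show ?thesis using chain[OF that] by simp
  qed
  define B where "B q j = (if \<tau> j = q then Oj j else if \<sigma> j = \<rho> q then X j else Sj j)" for q j
  have ptB: "Min (d j ` insert q (S - {\<rho> q})) \<le> B q j" if j: "j \<in> C" and q: "q \<in> Y" for j q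
  proof -
    let ?Z = "insert q (S - {\<rho> q})"
    have finZ: "finite ?Z" using finS by simp
    have mz: "Min (d j ` ?Z) \<le> d j z" if "z \<in> ?Z" for z using finZ that by (intro Min_le) auto
    show ?thesis
    proof (cases "\<tau> j = q")
      case True then show ?thesis using mz[of q] \<tau>(2)[of j] unfolding B_def by simp
    next
      case False
      show ?thesis
      proof (cases "\<sigma> j = \<rho> q")
        case True
        have "\<sigma> (\<pi> j) \<noteq> \<rho> q"
        proof
          assume "\<sigma> (\<pi> j) = \<rho> q"
          then have "cap (\<rho> q) (\<tau> j)" using pi2[OF j] True by simp
          then show False using \<rho>(3) q \<tau>(1)[of j] False by blast
        qed
        then have "\<sigma> (\<pi> j) \<in> ?Z" using \<sigma>(1) by simp
        then have "Min (d j ` ?Z) \<le> d j (\<sigma> (\<pi> j))" by (rule mz)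
        then show ?thesis using chain[OF j] True False unfolding B_def by simp
      next
        case False2: False
        have "\<sigma> j \<in> ?Z" using \<sigma>(1) False2 by simp
        then have "Min (d j ` ?Z) \<le> d j (\<sigma> j)" by (rule mz)
        then show ?thesis using \<sigma>(2)[of j] False False2 unfolding B_def by simp
      qed
    qed
  qed
  have costS: "cost C d S = (\<Sum>j\<in>C. Sj j)" unfolding cost_def Sj_def by simp
  have costY: "cost C d Y = (\<Sum>j\<in>C. Oj j)" unfolding cost_def Oj_def by simp
  have perq: "(\<Sum>j\<in>C. Sj j) \<le> (\<Sum>j\<in>C. B q j)" if q: "q \<in> Y" for q
  proof -
    have "(\<Sum>j\<in>C. Sj j) \<le> cost C d (insert q (S - {\<rho> q}))"
      using loc \<rho>(1) q costS by metis
    also have "\<dots> \<le> (\<Sum>j\<in>C. B q j)" unfolding cost_def by (rule sum_mono) (rule ptB[OF _ q])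
    finally show ?thesis .
  qed
  have ptint: "(\<Sum>q\<in>Y. int (B q j)) \<le> int (card Y) * int (Sj j) + (int (Oj j) - int (Sj j)) + 2 * (int (X j) - int (Sj j))"
    if j: "j \<in> C" for j
  proof -
    have "(\<Sum>q\<in>Y. int (B q j)) \<le> (\<Sum>q\<in>Y. int (Sj j) + ((if \<tau> j = q then int (Oj j) - int (Sj j) else 0)
              + (if \<rho> q = \<sigma> j then int (X j) - int (Sj j) else 0)))"
      by (rule sum_mono) (use SjX[OF j] in \<open>auto simp: B_def\<close>)
    also have "\<dots> = int (card Y) * int (Sj j) + ((\<Sum>q\<in>Y. (if \<tau> j = q then int (Oj j) - int (Sj j) else 0))
              + (\<Sum>q\<in>Y. (if \<rho> q = \<sigma> j then int (X j) - int (Sj j) else 0)))"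
      by (simp add: sum.distrib)
    also have "(\<Sum>q\<in>Y. (if \<tau> j = q then int (Oj j) - int (Sj j) else 0)) = int (Oj j) - int (Sj j)"
      using finY \<tau>(1)[of j] by simp
    also have "(\<Sum>q\<in>Y. (if \<rho> q = \<sigma> j then int (X j) - int (Sj j) else 0))
         = (\<Sum>q\<in>{q\<in>Y. \<rho> q = \<sigma> j}. int (X j) - int (Sj j))"
      by (rule sum.inter_filter[symmetric]) (rule finY)
    also have "\<dots> = int (card {q\<in>Y. \<rho> q = \<sigma> j}) * (int (X j) - int (Sj j))" by simp
    also have "\<dots> \<le> 2 * (int (X j) - int (Sj j))"
      using \<rho>(2) \<sigma>(1)[of j] SjX[OF j] by (intro mult_right_mono) auto
    finally show ?thesis by simp
  qed
  have "int (card Y) * (\<Sum>j\<in>C. int (Sj j)) = (\<Sum>q\<in>Y. (\<Sum>j\<in>C. int (Sj j)))" by simp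
  also have "\<dots> \<le> (\<Sum>q\<in>Y. (\<Sum>j\<in>C. int (B q j)))"
    by (rule sum_mono) (use perq in \<open>simp flip: of_nat_sum\<close>)
  also have "\<dots> = (\<Sum>j\<in>C. (\<Sum>q\<in>Y. int (B q j)))" by (rule sum.swap)
  also have "\<dots> \<le> (\<Sum>j\<in>C. int (card Y) * int (Sj j) + (int (Oj j) - int (Sj j)) + 2 * (int (X j) - int (Sj j)))"
    by (rule sum_mono) (rule ptint)
  also have "\<dots> = int (card Y) * (\<Sum>j\<in>C. int (Sj j)) + (\<Sum>j\<in>C. int (Oj j)) - (\<Sum>j\<in>C. int (Sj j))
      + 2 * ((\<Sum>j\<in>C. int (X j)) - (\<Sum>j\<in>C. int (Sj j)))"
    by (simp only: sum.distrib sum_subtractf flip: sum_distrib_left)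
  finally have main: "0 \<le> (\<Sum>j\<in>C. int (Oj j)) - (\<Sum>j\<in>C. int (Sj j)) + 2 * ((\<Sum>j\<in>C. int (X j)) - (\<Sum>j\<in>C. int (Sj j)))"
    by simp
  have r1: "(\<Sum>j\<in>C. int (Oj (\<pi> j))) = (\<Sum>j\<in>C. int (Oj j))"
    using sum.reindex_bij_betw[OF pi_bij, of "\<lambda>j. int (Oj j)"] .
  have r2: "(\<Sum>j\<in>C. int (Sj (\<pi> j))) = (\<Sum>j\<in>C. int (Sj j))"
    using sum.reindex_bij_betw[OF pi_bij, of "\<lambda>j. int (Sj j)"] .
  have "(\<Sum>j\<in>C. int (X j)) = (\<Sum>j\<in>C. int (Oj j)) + (\<Sum>j\<in>C. int (Oj (\<pi> j))) + (\<Sum>j\<in>C. int (Sj (\<pi> j)))"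
    unfolding X_def by (simp add: sum.distrib)
  then have "(\<Sum>j\<in>C. int (X j)) = 2 * (\<Sum>j\<in>C. int (Oj j)) + (\<Sum>j\<in>C. int (Sj j))" using r1 r2 by simp
  then have "(\<Sum>j\<in>C. int (Sj j)) \<le> 5 * (\<Sum>j\<in>C. int (Oj j))" using main by (simp add: algebra_simps)
  then have "int (\<Sum>j\<in>C. Sj j) \<le> int (5 * (\<Sum>j\<in>C. Oj j))" by simp
  then show ?thesis using costS costY by linarith
qed

lemma farness_cost: "farness V E X = cost V (dist V E) X"
  unfolding farness_def dist_set_def cost_def by simp

lemma ind_sum: "finite V \<Longrightarrow> A \<subseteq> V \<Longrightarrow> (\<Sum>x\<in>V. if x \<in> A then 1 else 0) = (card A :: nat)"
proof -
  assume "finite V" "A \<subseteq> V"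
  then have "(\<Sum>x\<in>V. if x \<in> A then 1 else 0) = (\<Sum>x\<in>{x\<in>V. x \<in> A}. (1::nat))"
    by (intro sum.inter_filter[symmetric])
  also have "{x\<in>V. x \<in> A} = A" using \<open>A \<subseteq> V\<close> by blast
  finally show ?thesis by simp
qed

lemma reduce:
  assumes cg: "connected_graph V E" and DV: "D \<subseteq> V"
    and dom: "\<forall>v\<in>D. \<exists>u\<in>V - D. dominates E u v"
    and cVD: "card (V - D) \<ge> k" and TV: "T \<subseteq> V" and cT: "card T = k" and k1: "1 \<le> k"
  shows "\<exists>Y. Y \<subseteq> V - D \<and> card Y = k \<and> cost V (dist V E) Y \<le> cost V (dist V E) T"
proof -
  let ?d = "dist V E"
  have finV: "finite V" using cg unfolding connected_graph_def simple_graph_def by blast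
  have finT: "finite T" using finV TV finite_subset by blast
  have Tne: "T \<noteq> {}" using cT k1 by auto
  have cTD: "card (T - D) + card (T \<inter> D) = card T"
  proof -
    have "card ((T - D) \<union> (T \<inter> D)) = card (T - D) + card (T \<inter> D)" using finT by (intro card_Un_disjoint) auto
    moreover have "(T - D) \<union> (T \<inter> D) = T" by blast
    ultimately show ?thesis by simp
  qed
  obtain g where g: "\<And>v. v \<in> D \<Longrightarrow> g v \<in> V - D \<and> dominates E (g v) v" using dom by metis
  define T2 where "T2 = (T - D) \<union> g ` (T \<inter> D)"
  have T2sub: "T2 \<subseteq> V - D" using g TV unfolding T2_def by auto
  have "card T2 \<le> card (T - D) + card (g ` (T \<inter> D))" unfolding T2_def by (rule card_Un_le)
  also have "\<dots> \<le> card (T - D) + card (T \<inter> D)" using card_image_le finT by auto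
  also have "\<dots> = card T" using cTD .
  finally have cT2: "card T2 \<le> k" using cT by simp
  have finVD: "finite (V - D)" using finV by simp
  have "card ((V - D) - T2) = card (V - D) - card T2"
    using T2sub finVD by (simp add: card_Diff_subset finite_subset)
  then have "k - card T2 \<le> card ((V - D) - T2)" using cVD by simp
  then obtain W where W: "W \<subseteq> (V - D) - T2" "card W = k - card T2" "finite W"
    using obtain_subset_with_card_n by blast
  define Y where "Y = T2 \<union> W"
  have finT2: "finite T2" using T2sub finVD finite_subset by blast
  have cY: "card Y = k" unfolding Y_def using W cT2 finT2 by (subst card_Un_disjoint) auto
  have YVD: "Y \<subseteq> V - D" unfolding Y_def using W T2sub by auto
  have finY: "finite Y" using YVD finVD finite_subset by blast
  have Yne: "Y \<noteq> {}" using cY k1 by auto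
  define dY where "dY x = Min (?d x ` Y)" for x
  define dT where "dT x = Min (?d x ` T)" for x
  have dYle: "dY x \<le> ?d x y" if "y \<in> Y" for x y unfolding dY_def using finY that by (intro Min_le) auto
  have dTin: "\<exists>t\<in>T. dT x = ?d x t" for x
  proof -
    have "dT x \<in> ?d x ` T" unfolding dT_def using finT Tne by (intro Min_in) auto
    then show ?thesis by auto
  qed
  have pt: "dY x + (if x \<in> Y - T then 1 else 0) \<le> dT x + (if x \<in> T \<inter> D then 1 else 0)" if x: "x \<in> V" for x
  proof -
    obtain t where t: "t \<in> T" "dT x = ?d x t" using dTin by blast
    show ?thesis
    proof (cases "x \<in> Y - T")
      case True
      then have "dY x = 0" using dYle[of x x] dist_self[OF x] by auto
      moreover have "x \<noteq> t" using True t by auto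
      then have "?d x t \<noteq> 0" using dist_zero[OF cg x] t TV by auto
      ultimately show ?thesis using t True by auto
    next
      case False
      show ?thesis
      proof (cases "x \<in> T \<inter> D")
        case True
        have gx: "g x \<in> V - D" "dominates E (g x) x" using g True by auto
        then have "g x \<noteq> x" using True by auto
        then have "?d x (g x) \<le> 1" using dist_dom1[OF cg _ x gx(2)] gx by auto
        moreover have "g x \<in> Y" using True unfolding Y_def T2_def by auto
        ultimately show ?thesis using dYle[of "g x" x] False True by auto
      next
        case False2: False
        have "dY x \<le> ?d x t"
        proof (cases "t \<in> D")
          case False
          then have "t \<in> Y" using t unfolding Y_def T2_def by auto
          then show ?thesis using dYle by blast
        next
          case True
          have gt: "g t \<in> V - D" "dominates E (g t) t" using g True by auto
          have "g t \<in> Y" using True t unfolding Y_def T2_def by auto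
          moreover have "x \<noteq> t" using False2 True t by auto
          then have "?d x (g t) \<le> ?d x t" using dist_dom[OF cg _ _ x gt(2)] gt t TV by auto
          ultimately show ?thesis using dYle[of "g t" x] by linarith
        qed
        then show ?thesis using t False False2 by auto
      qed
    qed
  qed
  have "(\<Sum>x\<in>V. dY x + (if x \<in> Y - T then 1 else 0)) \<le> (\<Sum>x\<in>V. dT x + (if x \<in> T \<inter> D then 1 else 0))"
    by (rule sum_mono) (rule pt)
  moreover have "(\<Sum>x\<in>V. (if x \<in> Y - T then 1 else 0)) = card (Y - T)"
    using finV YVD by (intro ind_sum) auto
  moreover have "(\<Sum>x\<in>V. (if x \<in> T \<inter> D then 1 else 0)) = card (T \<inter> D)"
    using finV TV by (intro ind_sum) auto
  ultimately have A: "(\<Sum>x\<in>V. dY x) + card (Y - T) \<le> (\<Sum>x\<in>V. dT x) + card (T \<inter> D)"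
    by (simp add: sum.distrib)
  have "Y \<inter> T \<subseteq> T - D" using YVD by auto
  then have "card (Y \<inter> T) \<le> card (T - D)" using finT by (intro card_mono) auto
  moreover have "card (T - D) + card (T \<inter> D) = k" using cTD cT by simp
  moreover have "card (Y - T) + card (Y \<inter> T) = k"
  proof -
    have "card ((Y - T) \<union> (Y \<inter> T)) = card (Y - T) + card (Y \<inter> T)" using finY by (intro card_Un_disjoint) auto
    moreover have "(Y - T) \<union> (Y \<inter> T) = Y" by blast
    ultimately show ?thesis using cY by simp
  qed
  ultimately have "card (T \<inter> D) \<le> card (Y - T)" by linarith
  then have "(\<Sum>x\<in>V. dY x) \<le> (\<Sum>x\<in>V. dT x)" using A by linarith
  then show ?thesis using YVD cY unfolding cost_def dY_def dT_def by blast
qed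

theorem mainTheorem3:
  fixes V :: "'a set" and E :: "'a \<Rightarrow> 'a \<Rightarrow> bool" and D S :: "'a set" and k :: nat
  assumes "connected_graph V E"
    and "1 \<le> k" and "k \<le> card V"
    and "D \<subseteq> V"
    and "\<forall>v\<in>D. \<exists>u\<in>V - D. dominates E u v"
    and "card (V - D) \<ge> k"
    and "S \<subseteq> V - D" and "card S = k"
    and "\<forall>s\<in>S. \<forall>w\<in>(V - D) - S. farness V E (insert w (S - {s})) \<ge> farness V E S"
  shows "farness V E S \<le> 5 * Min {farness V E T | T. T \<subseteq> V \<and> card T = k}"
proof -
  note cg = assms(1)
  let ?d = "dist V E"
  have finV: "finite V" using cg unfolding connected_graph_def simple_graph_def by blast
  let ?M = "{farness V E T | T. T \<subseteq> V \<and> card T = k}"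
  have "?M \<subseteq> (\<lambda>T. farness V E T) ` Pow V" by auto
  then have finM: "finite ?M" using finV by (meson finite_Pow_iff finite_imageI finite_subset)
  obtain T0 where "T0 \<subseteq> V" "card T0 = k" using obtain_subset_with_card_n[OF assms(3)] by blast
  then have "?M \<noteq> {}" by blast
  then have "Min ?M \<in> ?M" using finM by (intro Min_in)
  then obtain T where T: "T \<subseteq> V" "card T = k" "farness V E T = Min ?M" by auto
  obtain Y where Y: "Y \<subseteq> V - D" "card Y = k" "cost V ?d Y \<le> cost V ?d T"
    using reduce[OF cg assms(4,5,6) T(1,2) assms(2)] by blast
  have SV: "S \<subseteq> V" using assms(7) by blast
  have finS: "finite S" using SV finV finite_subset by blast
  have Sne: "S \<noteq> {}" using assms(2,8) by auto
  have Yne: "Y \<noteq> {}" using Y(2) assms(2) by auto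
  have mono: "cost V ?d S \<le> cost V ?d S'" if "S' \<subseteq> S" "S' \<noteq> {}" for S'
    unfolding cost_def using finS that by (intro sum_mono Min_antimono) auto
  have loc: "\<forall>s\<in>S. \<forall>q\<in>Y. cost V ?d S \<le> cost V ?d (insert q (S - {s}))"
  proof (intro ballI)
    fix s q assume s: "s \<in> S" and q: "q \<in> Y"
    show "cost V ?d S \<le> cost V ?d (insert q (S - {s}))"
    proof (cases "q \<in> S")
      case False
      then have "q \<in> (V - D) - S" using q Y(1) by auto
      then show ?thesis using assms(9) s unfolding farness_cost by blast
    next
      case True
      show ?thesis
      proof (cases "q = s")
        case True
        then have "insert q (S - {s}) = S" using s by auto
        then show ?thesis by simp
      next
        case False
        then have "insert q (S - {s}) = S - {s}" using \<open>q \<in> S\<close> by auto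
        moreover have "S - {s} \<noteq> {}" using False \<open>q \<in> S\<close> by auto
        ultimately show ?thesis using mono by simp
      qed
    qed
  qed
  have symd: "\<forall>x\<in>V. \<forall>y\<in>V. ?d x y = ?d y x" using dist_sym[OF cg] by blast
  have trid: "\<forall>x\<in>V. \<forall>y\<in>V. \<forall>z\<in>V. ?d x z \<le> ?d x y + ?d y z" using dist_tri[OF cg] by blast
  have "cost V ?d S \<le> 5 * cost V ?d Y"
    using kmedian[OF finV SV _ Sne Yne _ symd trid loc] Y assms(8) by auto
  then show ?thesis using Y(3) T(3) unfolding farness_cost by linarith
qed

end
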